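(* Let $n\ge 2$ and let $C_n=\{a_0<a_1<\cdots<a_{n-1}\}$ be a chain with $a_0=0$, $a_{n-1}=1$, with $\wedge=\min$ and $\vee=\max$. Let $\to$ be a binary operation on $C_n$. Then $\langle C_n,\vee,\wedge,\to,0,1\rangle$ is a semi-Heyting algebra if and only if all of the following hold: (i) $\{a_1,\dots,a_{n-1}\}$ is closed under $\to$ and $\langle\{a_1,\dots,a_{n-1}\},\vee,\wedge,\to,a_1,1\rangle$ is a semi-Heyting algebra; (ii) $0\to 0=1$; (iii) $a_i\to 0=0$ for all $1\le i\le n-1$; (iv) there exists $j\in\{0,1,\dots,n-1\}$ such that $0\to a_h=a_j$ for every $h$ with $j<h\le n-1$, and $0\to a_h\ge a_h$ for every $h$ with $1\le h\le j$. Consequently, for a fixed semi-Heyting operation on $\{a_1,\dots,a_{n-1}\}$, the number of ways to extend it to a semi-Heyting operation on $C_n$ equals $\sum_{i=0}^{n-1}\frac{(n-1)!}{i!}$.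
   Context: A semi-Heyting algebra is an algebra $\langle L,\vee,\wedge,\to,0,1\rangle$ such that: (SH1) $\langle L,\vee,\wedge,0,1\rangle$ is a bounded lattice with least element $0$ and greatest element $1$; (SH2) $x\wedge(x\to y)=x\wedge y$; (SH3) $x\wedge(y\to z)=x\wedge[(x\wedge y)\to(x\wedge z)]$; (SH4) $x\to x=1$, for all $x,y,z\in L$. *)

theory Defs
  imports Main
begin

text \<open>A finite chain a_0 < ... < a_(n-1) is represented by the indices 0, ..., n-1 of nat
  with their natural order; meet is min and join is max.\<close>

definition semi_heyting_chain :: "nat set \<Rightarrow> nat \<Rightarrow> nat \<Rightarrow> (nat \<Rightarrow> nat \<Rightarrow> nat) \<Rightarrow> bool" where
  "semi_heyting_chain S b t imp \<longleftrightarrow>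
     b \<in> S \<and> t \<in> S \<and> (\<forall>x\<in>S. b \<le> x \<and> x \<le> t) \<and>
     (\<forall>x\<in>S. \<forall>y\<in>S. imp x y \<in> S) \<and>
     (\<forall>x\<in>S. \<forall>y\<in>S. min x (imp x y) = min x y) \<and>
     (\<forall>x\<in>S. \<forall>y\<in>S. \<forall>z\<in>S. min x (imp y z) = min x (imp (min x y) (min x z))) \<and>
     (\<forall>x\<in>S. imp x x = t)"

end

theory Submission
  imports Defs "HOL-Library.FuncSet"
begin


lemma shc_cong:
  assumes "\<forall>x\<in>S. \<forall>y\<in>S. imp x y = imp' x y" "\<forall>x\<in>S. \<forall>y\<in>S. min x y \<in> S"
  shows "semi_heyting_chain S b t imp = semi_heyting_chain S b t imp'"
proof -
  have e1: "\<And>x y. x \<in> S \<Longrightarrow> y \<in> S \<Longrightarrow> imp x y = imp' x y" using assms(1) by blast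
  have e2: "\<And>x y z. x \<in> S \<Longrightarrow> y \<in> S \<Longrightarrow> z \<in> S \<Longrightarrow> imp (min x y) (min x z) = imp' (min x y) (min x z)"
    using assms by blast
  show ?thesis unfolding semi_heyting_chain_def by (simp add: e1 e2)
qed

lemma min_in_ivl: "\<forall>x\<in>{a..<n::nat}. \<forall>y\<in>{a..<n}. min x y \<in> {a..<n}"
  by auto

lemma C_to_j:
  fixes f :: "nat \<Rightarrow> nat"
  assumes n: "n \<ge> 2"
    and C: "\<forall>x z. 1 \<le> x \<and> x < z \<and> z \<le> n - 1 \<longrightarrow> min x (f z) = min x (f x)"
  shows "\<exists>j\<le>n - 1. (\<forall>h. j < h \<and> h \<le> n - 1 \<longrightarrow> f h = j) \<and> (\<forall>h. 1 \<le> h \<and> h \<le> j \<longrightarrow> f h \<ge> h)"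
proof -
  define P where "P j \<longleftrightarrow> j \<le> n - 1 \<and> (\<forall>h. 1 \<le> h \<and> h \<le> j \<longrightarrow> h \<le> f h)" for j
  have P0: "P 0" unfolding P_def by auto
  have bd: "\<And>y. P y \<Longrightarrow> y \<le> n - 1" unfolding P_def by auto
  define j where "j = (GREATEST j. P j)"
  have Pj: "P j" unfolding j_def using GreatestI_nat[of P 0 "n - 1", OF P0 bd] .
  have jmax: "\<And>k. P k \<Longrightarrow> k \<le> j" unfolding j_def using Greatest_le_nat bd by blast
  show ?thesis
  proof (cases "j = n - 1")
    case True
    then show ?thesis using Pj unfolding P_def by auto
  next
    case False
    with Pj have jl: "j < n - 1" unfolding P_def by auto
    have "\<not> P (Suc j)" using jmax by fastforce
    with jl Pj have fj1: "f (Suc j) < Suc j" unfolding P_def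
      by (metis le_SucE not_less Suc_leI)
    have fsj: "f (Suc j) = j"
    proof (cases "j = 0")
      case True then show ?thesis using fj1 by simp
    next
      case False
      have "min j (f (Suc j)) = min j (f j)" using C jl False by auto
      moreover have "f j \<ge> j" using Pj False unfolding P_def by auto
      ultimately show ?thesis using fj1 by linarith
    qed
    have "\<forall>h. j < h \<and> h \<le> n - 1 \<longrightarrow> f h = j"
    proof (intro allI impI)
      fix h assume h: "j < h \<and> h \<le> n - 1"
      show "f h = j"
      proof (cases "h = Suc j")
        case True then show ?thesis using fsj by simp
      next
        case False
        then have "min (Suc j) (f h) = min (Suc j) (f (Suc j))" using C h by auto
        then show ?thesis using fsj by linarith
      qed
    qed
    then show ?thesis using Pj jl unfolding P_def by (intro exI[of _ j]) auto
  qed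
qed

lemma j_to_C:
  fixes f :: "nat \<Rightarrow> nat"
  assumes "j \<le> n - 1" "\<forall>h. j < h \<and> h \<le> n - 1 \<longrightarrow> f h = j" "\<forall>h. 1 \<le> h \<and> h \<le> j \<longrightarrow> f h \<ge> h"
    and "1 \<le> x" "x < z" "z \<le> n - 1"
  shows "min x (f z) = min x (f x)"
proof -
  consider "z \<le> j" | "j < x" | "x \<le> j" "j < z" by linarith
  then show ?thesis
  proof cases
    case 1 then have "f z \<ge> z" "f x \<ge> x" using assms by auto
    then show ?thesis using assms by linarith
  next
    case 2 then have "f z = j" "f x = j" using assms by auto
    then show ?thesis by simp
  next
    case 3 then have "f z = j" "f x \<ge> x" using assms by auto
    then show ?thesis using 3 by linarith
  qed
qed

lemma part1:
  fixes n :: nat and imp :: "nat \<Rightarrow> nat \<Rightarrow> nat"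
  assumes n: "n \<ge> 2" and B: "\<forall>x<n. \<forall>y<n. imp x y < n"
  shows "semi_heyting_chain {0..<n} 0 (n - 1) imp \<longleftrightarrow>
          semi_heyting_chain {1..<n} 1 (n - 1) imp \<and>
          imp 0 0 = n - 1 \<and>
          (\<forall>i. 1 \<le> i \<and> i \<le> n - 1 \<longrightarrow> imp i 0 = 0) \<and>
          (\<exists>j\<le>n - 1. (\<forall>h. j < h \<and> h \<le> n - 1 \<longrightarrow> imp 0 h = j) \<and>
                      (\<forall>h. 1 \<le> h \<and> h \<le> j \<longrightarrow> imp 0 h \<ge> h))"
  (is "?L \<longleftrightarrow> ?R")
proof
  assume H: ?L
  have c2: "\<And>x y. x < n \<Longrightarrow> y < n \<Longrightarrow> min x (imp x y) = min x y"
    using H unfolding semi_heyting_chain_def by simp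
  have c3: "\<And>x y z. x < n \<Longrightarrow> y < n \<Longrightarrow> z < n \<Longrightarrow> min x (imp y z) = min x (imp (min x y) (min x z))"
    using H unfolding semi_heyting_chain_def by (metis atLeastLessThan_iff le0)
  have c4: "\<And>x. x < n \<Longrightarrow> imp x x = n - 1"
    using H unfolding semi_heyting_chain_def by simp
  have i: "semi_heyting_chain {1..<n} 1 (n - 1) imp"
    unfolding semi_heyting_chain_def
  proof (intro conjI ballI)
    fix x y assume xy: "x \<in> {1..<n}" "y \<in> {1..<n}"
    have "min x (imp x y) = min x y" using c2 xy by auto
    then have "imp x y \<ge> 1" using xy by (auto simp: min_def split: if_splits)
    then show "imp x y \<in> {1..<n}" using B xy by auto
  next
    fix x y z assume xyz: "x \<in> {1..<n}" "y \<in> {1..<n}" "z \<in> {1..<n}"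
    then show "min x (imp y z) = min x (imp (min x y) (min x z))" using c3[of x y z] by simp
  qed (use n c2 c4 in auto)
  have iii: "\<forall>i. 1 \<le> i \<and> i \<le> n - 1 \<longrightarrow> imp i 0 = 0"
  proof (intro allI impI)
    fix i assume "1 \<le> i \<and> i \<le> n - 1"
    then have "min i (imp i 0) = 0" using c2[of i 0] n by auto
    then show "imp i 0 = 0" using \<open>1 \<le> i \<and> i \<le> n - 1\<close> by (auto simp: min_def split: if_splits)
  qed
  have C: "\<forall>x z. 1 \<le> x \<and> x < z \<and> z \<le> n - 1 \<longrightarrow> min x (imp 0 z) = min x (imp 0 x)"
  proof (intro allI impI)
    fix x z assume a: "1 \<le> x \<and> x < z \<and> z \<le> n - 1"
    have "min x (imp 0 z) = min x (imp (min x 0) (min x z))" using c3[of x 0 z] a n by auto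
    then show "min x (imp 0 z) = min x (imp 0 x)" using a by simp
  qed
  have ii: "imp 0 0 = n - 1" using c4[of 0] n by simp
  show ?R using i ii iii C_to_j[OF n C] by (intro conjI) blast+
next
  assume R: ?R
  then have i: "semi_heyting_chain {1..<n} 1 (n - 1) imp" and ii: "imp 0 0 = n - 1"
    and iii: "\<forall>i. 1 \<le> i \<and> i \<le> n - 1 \<longrightarrow> imp i 0 = 0" by auto
  from R obtain j where j: "j \<le> n - 1" "\<forall>h. j < h \<and> h \<le> n - 1 \<longrightarrow> imp 0 h = j"
    "\<forall>h. 1 \<le> h \<and> h \<le> j \<longrightarrow> imp 0 h \<ge> h" by blast
  have d2: "\<And>x y. 1 \<le> x \<Longrightarrow> x < n \<Longrightarrow> 1 \<le> y \<Longrightarrow> y < n \<Longrightarrow> min x (imp x y) = min x y"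
    using i unfolding semi_heyting_chain_def by simp
  have d3: "\<And>x y z. 1 \<le> x \<Longrightarrow> x < n \<Longrightarrow> 1 \<le> y \<Longrightarrow> y < n \<Longrightarrow> 1 \<le> z \<Longrightarrow> z < n \<Longrightarrow> min x (imp y z) = min x (imp (min x y) (min x z))"
    using i unfolding semi_heyting_chain_def by (metis atLeastLessThan_iff)
  have d4: "\<And>x. 1 \<le> x \<Longrightarrow> x < n \<Longrightarrow> imp x x = n - 1"
    using i unfolding semi_heyting_chain_def by simp
  have sh2: "min x (imp x y) = min x y" if "x < n" "y < n" for x y
  proof -
    consider "x = 0" | "x \<ge> 1" "y = 0" | "x \<ge> 1" "y \<ge> 1" by linarith
    then show ?thesis
    proof cases
      case 2 then show ?thesis using iii that by auto
    next
      case 3 then show ?thesis using d2 that by auto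
    qed simp
  qed
  have sh4: "imp x x = n - 1" if "x < n" for x
    using that ii d4 by (cases "x = 0") auto
  have sh3: "min x (imp y z) = min x (imp (min x y) (min x z))" if "x < n" "y < n" "z < n" for x y z
  proof -
    consider "x = 0" | "x \<ge> 1" "y = 0" "z = 0" | "x \<ge> 1" "y = 0" "z \<ge> 1" "z \<le> x"
      | "x \<ge> 1" "y = 0" "x < z" | "x \<ge> 1" "y \<ge> 1" "z = 0" | "x \<ge> 1" "y \<ge> 1" "z \<ge> 1"
      by linarith
    then show ?thesis
    proof cases
      case 1 then show ?thesis by simp
    next
      case 2 then show ?thesis by simp
    next
      case 3 then show ?thesis by (simp add: min_absorb2)
    next
      case 4
      have "min x (imp 0 z) = min x (imp 0 x)"
        using j_to_C[of j n "imp 0" x z] j 4 that by auto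
      then show ?thesis using 4 by simp
    next
      case 5
      have "min x y \<ge> 1" using 5 by simp
      then show ?thesis using 5 iii that by (simp add: min_def)
    next
      case 6 then show ?thesis using d3[of x y z] that by simp
    qed
  qed
  show ?L unfolding semi_heyting_chain_def
  proof (intro conjI ballI)
    fix x y z assume xyz: "x \<in> {0..<n}" "y \<in> {0..<n}" "z \<in> {0..<n}"
    then show "min x (imp y z) = min x (imp (min x y) (min x z))" using sh3[of x y z] by simp
  qed (use n B sh2 sh4 in auto)
qed



definition Tj :: "nat \<Rightarrow> nat \<Rightarrow> (nat \<Rightarrow> nat) set" where
  "Tj n j = {g. (\<forall>h. \<not> (1 \<le> h \<and> h < n) \<longrightarrow> g h = 0) \<and> (\<forall>h. j < h \<and> h < n \<longrightarrow> g h = j)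
     \<and> (\<forall>h. 1 \<le> h \<and> h \<le> j \<longrightarrow> h \<le> g h \<and> g h < n)}"

definition extF :: "nat \<Rightarrow> nat \<Rightarrow> (nat \<Rightarrow> nat) \<Rightarrow> nat \<Rightarrow> nat" where
  "extF n j g = (\<lambda>h. if 1 \<le> h \<and> h \<le> j then g h else if j < h \<and> h < n then j else 0)"

lemma Tj_image:
  assumes "j < n"
  shows "Tj n j = extF n j ` (PiE {1..j} (\<lambda>h. {h..<n}))"
proof
  show "Tj n j \<subseteq> extF n j ` (PiE {1..j} (\<lambda>h. {h..<n}))"
  proof
    fix g assume g: "g \<in> Tj n j"
    have "restrict g {1..j} \<in> PiE {1..j} (\<lambda>h. {h..<n})" using g unfolding Tj_def by auto
    moreover have "g = extF n j (restrict g {1..j})"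
    proof
      fix h show "g h = extF n j (restrict g {1..j}) h"
        using g assms unfolding Tj_def extF_def by auto
    qed
    ultimately show "g \<in> extF n j ` (PiE {1..j} (\<lambda>h. {h..<n}))" by blast
  qed
next
  show "extF n j ` (PiE {1..j} (\<lambda>h. {h..<n})) \<subseteq> Tj n j"
    using assms unfolding Tj_def extF_def by (auto simp: PiE_iff)
qed

lemma extF_inj: "inj_on (extF n j) (PiE {1..j} (\<lambda>h. {h..<n}))"
proof (rule inj_onI)
  fix g1 g2 assume g: "g1 \<in> PiE {1..j} (\<lambda>h. {h..<n})" "g2 \<in> PiE {1..j} (\<lambda>h. {h..<n})"
    and e: "extF n j g1 = extF n j g2"
  show "g1 = g2"
  proof (rule PiE_ext[OF g])
    fix i assume "i \<in> {1..j}"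
    then show "g1 i = g2 i" using fun_cong[OF e, of i] unfolding extF_def by auto
  qed
qed

lemma card_Tj: "j < n \<Longrightarrow> card (Tj n j) = (\<Prod>h\<in>{1..j}. n - h)"
proof -
  assume "j < n"
  then have "card (Tj n j) = card (PiE {1..j} (\<lambda>h. {h..<n}))"
    using Tj_image card_image[OF extF_inj] by metis
  also have "\<dots> = (\<Prod>h\<in>{1..j}. card {h..<n})" by (rule card_PiE) simp
  finally show ?thesis by simp
qed

lemma finite_Tj: "j < n \<Longrightarrow> finite (Tj n j)"
  by (simp add: Tj_image finite_PiE)

lemma prod_fact: "j \<le> n - 1 \<Longrightarrow> (\<Prod>h\<in>{1..j}. n - h) * fact (n - 1 - j) = (fact (n - 1) :: nat)"
proof (induction j)
  case 0 then show ?case by simp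
next
  case (Suc j)
  have f: "fact (n - 1 - j) = (n - 1 - j) * (fact (n - 1 - Suc j) :: nat)"
  proof -
    have e: "n - 1 - j = Suc (n - 1 - Suc j)" using Suc.prems by linarith
    show ?thesis unfolding e by simp
  qed
  have "(\<Prod>h\<in>{1..Suc j}. n - h) * fact (n - 1 - Suc j) = (\<Prod>h\<in>{1..j}. n - h) * ((n - Suc j) * fact (n - 1 - Suc j))"
    by (simp add: prod.cl_ivl_Suc mult.assoc)
  also have "\<dots> = (\<Prod>h\<in>{1..j}. n - h) * fact (n - 1 - j)" using f by simp
  also have "\<dots> = fact (n - 1)" using Suc by simp
  finally show ?case .
qed

lemma Tj_disj: "j < k \<Longrightarrow> k < n \<Longrightarrow> Tj n j \<inter> Tj n k = {}"
proof (rule ccontr)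
  assume a: "j < k" "k < n" "Tj n j \<inter> Tj n k \<noteq> {}"
  then obtain g where g: "g \<in> Tj n j" "g \<in> Tj n k" by blast
  have "g (Suc j) = j" using g(1) a unfolding Tj_def by auto
  moreover have "g (Suc j) \<ge> Suc j" using g(2) a unfolding Tj_def by auto
  ultimately show False by simp
qed

lemma card_union: "card (\<Union>j<n. Tj n j) = (\<Sum>i<n. fact (n - 1) div fact i)"
proof -
  have "card (\<Union>j<n. Tj n j) = (\<Sum>j<n. card (Tj n j))"
  proof (rule card_UN_disjoint)
    show "\<forall>i\<in>{..<n}. \<forall>j\<in>{..<n}. i \<noteq> j \<longrightarrow> Tj n i \<inter> Tj n j = {}"
      using Tj_disj by (metis inf_commute lessThan_iff linorder_neqE_nat)
  qed (auto simp: finite_Tj)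
  also have "\<dots> = (\<Sum>j<n. fact (n - 1) div fact (n - Suc j))"
  proof (rule sum.cong[OF refl])
    fix j assume "j \<in> {..<n}"
    then have j: "j < n" by simp
    have "(\<Prod>h\<in>{1..j}. n - h) * fact (n - 1 - j) = (fact (n - 1) :: nat)"
      using prod_fact[of j n] j by simp
    then have "fact (n - 1) div fact (n - 1 - j) = (\<Prod>h\<in>{1..j}. n - h)"
      by (metis fact_nonzero nonzero_mult_div_cancel_right)
    then show "card (Tj n j) = fact (n - 1) div fact (n - Suc j)"
      using card_Tj[OF j] by simp
  qed
  also have "\<dots> = (\<Sum>i<n. fact (n - 1) div fact i)"
    by (rule sum.nat_diff_reindex)
  finally show ?thesis .
qed


theorem mainTheorem2:
  fixes n :: nat
  assumes "n \<ge> 2"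
  shows
   "(\<forall>imp :: nat \<Rightarrow> nat \<Rightarrow> nat.
       (\<forall>x<n. \<forall>y<n. imp x y < n) \<longrightarrow>
       (semi_heyting_chain {0..<n} 0 (n - 1) imp \<longleftrightarrow>
          semi_heyting_chain {1..<n} 1 (n - 1) imp \<and>
          imp 0 0 = n - 1 \<and>
          (\<forall>i. 1 \<le> i \<and> i \<le> n - 1 \<longrightarrow> imp i 0 = 0) \<and>
          (\<exists>j\<le>n - 1. (\<forall>h. j < h \<and> h \<le> n - 1 \<longrightarrow> imp 0 h = j) \<and>
                      (\<forall>h. 1 \<le> h \<and> h \<le> j \<longrightarrow> imp 0 h \<ge> h))))
    \<and>
    (\<forall>imp' :: nat \<Rightarrow> nat \<Rightarrow> nat.
       semi_heyting_chain {1..<n} 1 (n - 1) imp' \<longrightarrow>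
       card {imp :: nat \<Rightarrow> nat \<Rightarrow> nat.
               (\<forall>x y. \<not> (x < n \<and> y < n) \<longrightarrow> imp x y = 0) \<and>
               semi_heyting_chain {0..<n} 0 (n - 1) imp \<and>
               (\<forall>x\<in>{1..<n}. \<forall>y\<in>{1..<n}. imp x y = imp' x y)}
         = (\<Sum>i<n. fact (n - 1) div fact i))"
proof (rule conjI)
  note n = assms
  show "\<forall>imp :: nat \<Rightarrow> nat \<Rightarrow> nat.
       (\<forall>x<n. \<forall>y<n. imp x y < n) \<longrightarrow>
       (semi_heyting_chain {0..<n} 0 (n - 1) imp \<longleftrightarrow>
          semi_heyting_chain {1..<n} 1 (n - 1) imp \<and>
          imp 0 0 = n - 1 \<and>
          (\<forall>i. 1 \<le> i \<and> i \<le> n - 1 \<longrightarrow> imp i 0 = 0) \<and>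
          (\<exists>j\<le>n - 1. (\<forall>h. j < h \<and> h \<le> n - 1 \<longrightarrow> imp 0 h = j) \<and>
                      (\<forall>h. 1 \<le> h \<and> h \<le> j \<longrightarrow> imp 0 h \<ge> h)))"
    using part1[OF n] by blast
  show "\<forall>imp' :: nat \<Rightarrow> nat \<Rightarrow> nat.
       semi_heyting_chain {1..<n} 1 (n - 1) imp' \<longrightarrow>
       card {imp :: nat \<Rightarrow> nat \<Rightarrow> nat.
               (\<forall>x y. \<not> (x < n \<and> y < n) \<longrightarrow> imp x y = 0) \<and>
               semi_heyting_chain {0..<n} 0 (n - 1) imp \<and>
               (\<forall>x\<in>{1..<n}. \<forall>y\<in>{1..<n}. imp x y = imp' x y)}
         = (\<Sum>i<n. fact (n - 1) div fact i)"
  proof (intro allI impI)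
    fix imp' :: "nat \<Rightarrow> nat \<Rightarrow> nat"
    assume sh': "semi_heyting_chain {1..<n} 1 (n - 1) imp'"
    have cl': "\<And>x y. 1 \<le> x \<Longrightarrow> x < n \<Longrightarrow> 1 \<le> y \<Longrightarrow> y < n \<Longrightarrow> imp' x y < n"
      using sh' unfolding semi_heyting_chain_def by (metis atLeastLessThan_iff)
    define S where "S = {imp :: nat \<Rightarrow> nat \<Rightarrow> nat.
               (\<forall>x y. \<not> (x < n \<and> y < n) \<longrightarrow> imp x y = 0) \<and>
               semi_heyting_chain {0..<n} 0 (n - 1) imp \<and>
               (\<forall>x\<in>{1..<n}. \<forall>y\<in>{1..<n}. imp x y = imp' x y)}"
    define \<psi> where "\<psi> g = (\<lambda>x y. if x < n \<and> y < n then (if x = 0 then (if y = 0 then n - 1 else g y)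
        else if y = 0 then 0 else imp' x y) else 0)" for g :: "nat \<Rightarrow> nat"
    define T where "T = (\<Union>j<n. Tj n j)"
    have inj: "inj_on \<psi> T"
    proof (rule inj_onI)
      fix g1 g2 assume g: "g1 \<in> T" "g2 \<in> T" and e: "\<psi> g1 = \<psi> g2"
      show "g1 = g2"
      proof
        fix h
        show "g1 h = g2 h"
        proof (cases "1 \<le> h \<and> h < n")
          case True
          then show ?thesis using fun_cong[OF fun_cong[OF e, of 0], of h] unfolding \<psi>_def by auto
        next
          case False
          then show ?thesis using g unfolding T_def Tj_def by auto
        qed
      qed
    qed
    have "S = \<psi> ` T"
    proof
      show "S \<subseteq> \<psi> ` T"
      proof
        fix imp assume "imp \<in> S"
        then have z: "\<forall>x y. \<not> (x < n \<and> y < n) \<longrightarrow> imp x y = 0"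
          and sh: "semi_heyting_chain {0..<n} 0 (n - 1) imp"
          and ag: "\<forall>x\<in>{1..<n}. \<forall>y\<in>{1..<n}. imp x y = imp' x y" unfolding S_def by auto
        have B: "\<forall>x<n. \<forall>y<n. imp x y < n"
          using sh unfolding semi_heyting_chain_def by (metis atLeastLessThan_iff le0)
        have R: "semi_heyting_chain {1..<n} 1 (n - 1) imp \<and>
          imp 0 0 = n - 1 \<and>
          (\<forall>i. 1 \<le> i \<and> i \<le> n - 1 \<longrightarrow> imp i 0 = 0) \<and>
          (\<exists>j\<le>n - 1. (\<forall>h. j < h \<and> h \<le> n - 1 \<longrightarrow> imp 0 h = j) \<and>
                      (\<forall>h. 1 \<le> h \<and> h \<le> j \<longrightarrow> imp 0 h \<ge> h))"
          using part1[OF n B] sh by blast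
        then obtain j where j: "j \<le> n - 1" "\<forall>h. j < h \<and> h \<le> n - 1 \<longrightarrow> imp 0 h = j"
          "\<forall>h. 1 \<le> h \<and> h \<le> j \<longrightarrow> imp 0 h \<ge> h" by blast
        define g where "g = (\<lambda>h. if 1 \<le> h \<and> h < n then imp 0 h else 0)"
        have "g \<in> Tj n j" unfolding Tj_def g_def using j B by auto
        moreover have "j < n" using j n by linarith
        ultimately have gT: "g \<in> T" unfolding T_def by blast
        have "imp = \<psi> g"
        proof (intro ext)
          fix x y
          show "imp x y = \<psi> g x y"
          proof (cases "x < n \<and> y < n")
            case False then show ?thesis using z unfolding \<psi>_def by auto
          next
            case True
            consider "x = 0" "y = 0" | "x = 0" "y \<ge> 1" | "x \<ge> 1" "y = 0" | "x \<ge> 1" "y \<ge> 1" by linarith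
            then show ?thesis
            proof cases
              case 1 then show ?thesis using R True unfolding \<psi>_def by auto
            next
              case 2 then show ?thesis using True unfolding \<psi>_def g_def by auto
            next
              case 3 then show ?thesis using R True unfolding \<psi>_def by auto
            next
              case 4 then show ?thesis using ag True unfolding \<psi>_def by auto
            qed
          qed
        qed
        then show "imp \<in> \<psi> ` T" using gT by blast
      qed
    next
      show "\<psi> ` T \<subseteq> S"
      proof
        fix imp assume "imp \<in> \<psi> ` T"
        then obtain g j where gj: "j < n" "g \<in> Tj n j" and imp: "imp = \<psi> g" unfolding T_def by blast
        have g1: "\<forall>h. j < h \<and> h < n \<longrightarrow> g h = j" "\<forall>h. 1 \<le> h \<and> h \<le> j \<longrightarrow> h \<le> g h \<and> g h < n"
          using gj(2) unfolding Tj_def by auto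
        have gb: "g y < n" if "1 \<le> y" "y < n" for y
          using g1 gj(1) that by (cases "y \<le> j") auto
        have B: "\<forall>x<n. \<forall>y<n. imp x y < n"
          unfolding imp \<psi>_def using gb cl' n by auto
        have ag: "\<forall>x\<in>{1..<n}. \<forall>y\<in>{1..<n}. imp x y = imp' x y"
          unfolding imp \<psi>_def by auto
        have "semi_heyting_chain {1..<n} 1 (n - 1) imp"
          using shc_cong[OF ag min_in_ivl] sh' by simp
        moreover have "imp 0 0 = n - 1" unfolding imp \<psi>_def using n by auto
        moreover have "\<forall>i. 1 \<le> i \<and> i \<le> n - 1 \<longrightarrow> imp i 0 = 0" unfolding imp \<psi>_def by auto
        moreover have "\<exists>j\<le>n - 1. (\<forall>h. j < h \<and> h \<le> n - 1 \<longrightarrow> imp 0 h = j) \<and>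
                      (\<forall>h. 1 \<le> h \<and> h \<le> j \<longrightarrow> imp 0 h \<ge> h)"
        proof (intro exI[of _ j] conjI allI impI)
          show "j \<le> n - 1" using gj by linarith
        next
          fix h assume "j < h \<and> h \<le> n - 1"
          then show "imp 0 h = j" using g1 n unfolding imp \<psi>_def by auto
        next
          fix h assume "1 \<le> h \<and> h \<le> j"
          then show "imp 0 h \<ge> h" using g1 gj n unfolding imp \<psi>_def by auto
        qed
        ultimately have "semi_heyting_chain {0..<n} 0 (n - 1) imp"
          using part1[OF n B] by blast
        moreover have "\<forall>x y. \<not> (x < n \<and> y < n) \<longrightarrow> imp x y = 0" unfolding imp \<psi>_def by auto
        ultimately show "imp \<in> S" unfolding S_def using ag by blast
      qed
    qed
    then have "card S = card T" using card_image[OF inj] by simp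
    also have "\<dots> = (\<Sum>i<n. fact (n - 1) div fact i)" unfolding T_def by (rule card_union)
    finally show "card {imp :: nat \<Rightarrow> nat \<Rightarrow> nat.
               (\<forall>x y. \<not> (x < n \<and> y < n) \<longrightarrow> imp x y = 0) \<and>
               semi_heyting_chain {0..<n} 0 (n - 1) imp \<and>
               (\<forall>x\<in>{1..<n}. \<forall>y\<in>{1..<n}. imp x y = imp' x y)}
         = (\<Sum>i<n. fact (n - 1) div fact i)" unfolding S_def .
  qed
qed

end
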